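(* Let $D$ be a divisible periodic subgroup of an abelian group $A$ and let $\varphi$ be an endomorphism of $A$. If $\varphi$ is inertial or left-inertial, then $\varphi(D)\subseteq D$ and $\varphi$ acts on $D$ as a multiplication.
   Context: Abelian groups are written additively. An endomorphism $\varphi$ of $A$ is inertial if $(\varphi(X)+X)/X$ is finite for every subgroup $X\le A$, and left-inertial if $X/(X\cap\varphi(X))$ is finite for every $X\le A$. On a periodic group, a multiplication is the componentwise action of an element of $\prod_p\mathbb{Z}_p$ ($p$-adic integers) on the $p$-components. *)

theory Defs
  imports Main "HOL-Number_Theory.Number_Theory" "HOL-Computational_Algebra.Computational_Algebra"
begin

text \<open>The abelian group A is the whole type 'a of class ab_group_add (written additively).\<close>

fun nsmul :: "nat \<Rightarrow> 'a::ab_group_add \<Rightarrow> 'a" where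
  "nsmul 0 x = 0"
| "nsmul (Suc n) x = x + nsmul n x"

definition zsmul :: "int \<Rightarrow> 'a::ab_group_add \<Rightarrow> 'a" where
  "zsmul k x = (if 0 \<le> k then nsmul (nat k) x else - nsmul (nat (- k)) x)"

definition subgrp :: "'a::ab_group_add set \<Rightarrow> bool" where
  "subgrp X \<longleftrightarrow> 0 \<in> X \<and> (\<forall>x\<in>X. \<forall>y\<in>X. x + y \<in> X) \<and> (\<forall>x\<in>X. - x \<in> X)"

definition endo :: "('a::ab_group_add \<Rightarrow> 'a) \<Rightarrow> bool" where
  "endo f \<longleftrightarrow> (\<forall>x y. f (x + y) = f x + f y)"

text \<open>For K a subgroup of H: H/K is finite, i.e. finitely many cosets of K meet H.\<close>
definition finite_quot :: "'a::ab_group_add set \<Rightarrow> 'a set \<Rightarrow> bool" where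
  "finite_quot H K \<longleftrightarrow> finite ((\<lambda>y. {y + k | k. k \<in> K}) ` H)"

definition inertial :: "('a::ab_group_add \<Rightarrow> 'a) \<Rightarrow> bool" where
  "inertial f \<longleftrightarrow> (\<forall>X. subgrp X \<longrightarrow> finite_quot {a + b | a b. a \<in> f ` X \<and> b \<in> X} X)"

definition left_inertial :: "('a::ab_group_add \<Rightarrow> 'a) \<Rightarrow> bool" where
  "left_inertial f \<longleftrightarrow> (\<forall>X. subgrp X \<longrightarrow> finite_quot X (X \<inter> f ` X))"

definition divisible :: "'a::ab_group_add set \<Rightarrow> bool" where
  "divisible D \<longleftrightarrow> (\<forall>d\<in>D. \<forall>n::nat. n > 0 \<longrightarrow> (\<exists>e\<in>D. nsmul n e = d))"

definition periodic :: "'a::ab_group_add set \<Rightarrow> bool" where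
  "periodic D \<longleftrightarrow> (\<forall>d\<in>D. \<exists>n::nat. n > 0 \<and> nsmul n d = 0)"

text \<open>A p-adic integer, represented as a coherent sequence: a k is a residue mod p^k
  and a (k+1) reduces to a k modulo p^k (inverse limit of the Z/p^k).\<close>
definition padic_int :: "nat \<Rightarrow> (nat \<Rightarrow> int) \<Rightarrow> bool" where
  "padic_int p a \<longleftrightarrow> (\<forall>k. [a (Suc k) = a k] (mod (int p ^ k)))"

text \<open>f acts on the periodic group D as the multiplication by the element (a p)_p of
  the product of the p-adic integers: on an element x with n x = 0 (n > 0), i.e.
  x in the sum of the p-components for p dividing n, the action is multiplication by
  the integer m with m = a p (v_p n) mod p^(v_p n) for all primes p dividing n
  (the action of the p-adic integers through Z/n = prod Z/p^(v_p n)).\<close>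
definition acts_as_multiplication :: "('a::ab_group_add \<Rightarrow> 'a) \<Rightarrow> 'a set \<Rightarrow> bool" where
  "acts_as_multiplication f D \<longleftrightarrow>
     (\<exists>a :: nat \<Rightarrow> nat \<Rightarrow> int. (\<forall>p. prime p \<longrightarrow> padic_int p (a p)) \<and>
        (\<forall>x\<in>D. \<forall>n::nat. n > 0 \<longrightarrow> nsmul n x = 0 \<longrightarrow>
           (\<exists>m::int. (\<forall>p. prime p \<and> p dvd n \<longrightarrow>
                         [m = a p (multiplicity p n)] (mod (int p ^ multiplicity p n)))
                     \<and> f x = zsmul m x)))"

end

theory Submission
  imports Defs
begin

lemma ns_add: "nsmul (m + n) x = nsmul m x + nsmul n x"
  by (induction m) (auto simp: add.assoc)

lemma ns_plus: "nsmul n (x + y) = nsmul n x + nsmul n y"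
  by (induction n) (auto simp: algebra_simps)

lemma ns_neg: "nsmul n (- x) = - nsmul n x"
  by (induction n) (auto simp: algebra_simps)

lemma ns_mult: "nsmul (m * n) x = nsmul m (nsmul n x)"
  by (induction m) (auto simp: ns_add)

lemma zs_nat: "zsmul (int n) x = nsmul n x"
  by (simp add: zsmul_def)

lemma zs_0[simp]: "zsmul 0 x = 0" by (simp add: zsmul_def)
lemma zs_1[simp]: "zsmul 1 x = x" by (simp add: zsmul_def)

lemma zs_succ: "zsmul (a + 1) x = zsmul a x + x"
proof (cases "0 \<le> a")
  case True
  then have "nat (a+1) = Suc (nat a)" by simp
  then show ?thesis using True by (simp add: zsmul_def add.commute)
next
  case False
  show ?thesis
  proof (cases "a = -1")
    case True then show ?thesis by (simp add: zsmul_def)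
  next
    case F: False
    with False have "nat (- a) = Suc (nat (- (a+1)))" by simp
    then show ?thesis using False F by (simp add: zsmul_def algebra_simps)
  qed
qed

lemma zs_add: "zsmul (a + b) x = zsmul a x + zsmul b x"
proof (induction b rule: int_induct[where k=0])
  case base then show ?case by simp
next
  case (step1 i) then show ?case
    by (metis (no_types, lifting) add.assoc zs_succ)
next
  case (step2 i)
  have "zsmul (a + i) x = zsmul (a + (i - 1)) x + x" using zs_succ[of "a + (i - 1)" x] by simp
  moreover have "zsmul i x = zsmul (i - 1) x + x" using zs_succ[of "i - 1" x] by simp
  ultimately show ?case using step2 by (simp add: algebra_simps)
qed

lemma zs_neg: "zsmul (- a) x = - zsmul a x"
  using zs_add[of a "-a" x] by (simp add: eq_neg_iff_add_eq_0 add.commute)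

lemma zs_minus: "zsmul (a - b) x = zsmul a x - zsmul b x"
  using zs_add[of a "-b" x] zs_neg[of b x] by simp

lemma zs_mult: "zsmul (a * b) x = zsmul a (zsmul b x)"
proof (induction a rule: int_induct[where k=0])
  case base then show ?case by simp
next
  case (step1 i) then show ?case
    by (simp add: distrib_right zs_add zs_succ)
next
  case (step2 i) then show ?case
    by (simp add: left_diff_distrib zs_minus)
qed

lemma zs_plus: "zsmul a (x + y) = zsmul a x + zsmul a y"
proof (cases "0 \<le> a")
  case True then show ?thesis by (simp add: zsmul_def ns_plus)
next
  case False then show ?thesis by (simp add: zsmul_def ns_plus)
qed

lemma zs_zero[simp]: "zsmul a 0 = 0"
  using zs_plus[of a 0 0] by simp

lemma zs_uminus: "zsmul a (- x) = - zsmul a x"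
  using zs_plus[of a x "-x"] by (simp add: eq_neg_iff_add_eq_0 add.commute)

lemma zs_dvd_zero: "zsmul q y = 0 \<Longrightarrow> q dvd r \<Longrightarrow> zsmul r y = 0"
  by (metis dvd_def mult.commute zs_mult zs_zero)

lemma endo_0: "endo f \<Longrightarrow> f 0 = 0"
  unfolding endo_def by (metis add_cancel_right_right)

lemma endo_uminus: "endo f \<Longrightarrow> f (- x) = - f x"
proof -
  assume e: "endo f"
  have "f (- x) + f x = 0" using e endo_0[OF e] unfolding endo_def by (metis add.left_inverse)
  then show ?thesis by (simp add: eq_neg_iff_add_eq_0)
qed

lemma endo_ns: "endo f \<Longrightarrow> f (nsmul n x) = nsmul n (f x)"
  by (induction n) (auto simp: endo_0 endo_def)

lemma endo_zs: "endo f \<Longrightarrow> f (zsmul a x) = zsmul a (f x)"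
  by (simp add: zsmul_def endo_ns endo_uminus)

lemma endo_add: "endo f \<Longrightarrow> f (x + y) = f x + f y"
  by (simp add: endo_def)

lemma endo_diff: "endo f \<Longrightarrow> f (x - y) = f x - f y"
  by (metis diff_conv_add_uminus endo_add endo_uminus)

lemma subgrp_ns: "subgrp X \<Longrightarrow> x \<in> X \<Longrightarrow> nsmul n x \<in> X"
  by (induction n) (auto simp: subgrp_def)

lemma subgrp_zs: "subgrp X \<Longrightarrow> x \<in> X \<Longrightarrow> zsmul a x \<in> X"
  by (auto simp: zsmul_def subgrp_ns subgrp_def)

lemma subgrp_add: "subgrp X \<Longrightarrow> x \<in> X \<Longrightarrow> y \<in> X \<Longrightarrow> x + y \<in> X"
  by (auto simp: subgrp_def)

lemma subgrp_diff: "subgrp X \<Longrightarrow> x \<in> X \<Longrightarrow> y \<in> X \<Longrightarrow> x - y \<in> X"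
  by (metis diff_conv_add_uminus subgrp_def)

lemma subgrp_0: "subgrp X \<Longrightarrow> 0 \<in> X" by (simp add: subgrp_def)

definition cyc :: "'a::ab_group_add \<Rightarrow> 'a set" where
  "cyc g = range (\<lambda>t. zsmul t g)"

lemma ord_exists:
  assumes "nsmul n g = 0" "n > 0"
  shows "\<exists>r>0. \<forall>k. zsmul k g = 0 \<longleftrightarrow> int r dvd k"
proof -
  define r where "r = (LEAST n. n > 0 \<and> nsmul n g = 0)"
  have r: "r > 0 \<and> nsmul r g = 0" unfolding r_def by (rule LeastI[of _ n]) (use assms in auto)
  have "zsmul k g = 0 \<longleftrightarrow> int r dvd k" for k
  proof -
    have k: "k = (k div int r) * int r + k mod int r" by simp
    have "zsmul k g = zsmul ((k div int r) * int r + k mod int r) g" by simp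
    also have "\<dots> = zsmul (k div int r) (zsmul (int r) g) + zsmul (k mod int r) g"
      by (simp only: zs_add zs_mult)
    also have "\<dots> = zsmul (k mod int r) g" using r by (simp add: zs_nat)
    finally have eq: "zsmul k g = zsmul (k mod int r) g" .
    show ?thesis
    proof
      assume z: "zsmul k g = 0"
      show "int r dvd k"
      proof (rule ccontr)
        assume "\<not> int r dvd k"
        then have m0: "k mod int r \<noteq> 0" by (simp add: dvd_eq_mod_eq_0)
        have "k mod int r \<ge> 0" "k mod int r < int r" using r by simp_all
        then have r: "k mod int r > 0" "k mod int r < int r" using m0 by linarith+
        have "nsmul (nat (k mod int r)) g = 0" using z eq r by (simp add: zsmul_def)
        moreover have "nat (k mod int r) < r" using r by simp
        ultimately show False using r not_less_Least[of "nat (k mod int r)" "\<lambda>n. n > 0 \<and> nsmul n g = 0"]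
          unfolding r_def by auto
      qed
    next
      assume "int r dvd k"
      then show "zsmul k g = 0" using eq by simp
    qed
  qed
  then show ?thesis using r by blast
qed

lemma cyc_lemma:
  assumes "nsmul n g = 0" "n > 0" "a = zsmul s g" "b = zsmul t g"
    and ann: "\<forall>k. zsmul k a = 0 \<longrightarrow> zsmul k b = 0"
  shows "\<exists>u. b = zsmul u a"
proof -
  obtain r where r: "r > 0" "\<And>k. zsmul k g = 0 \<longleftrightarrow> int r dvd k"
    using ord_exists[OF assms(1,2)] by blast
  define d where "d = gcd s (int r)"
  have d0: "d > 0" using r(1) d_def by simp
  define k where "k = int r div d"
  have ok: "int r = d * k" unfolding k_def d_def by simp
  have k0: "k \<noteq> 0" using ok r(1) by auto
  obtain s' where s': "s = d * s'" unfolding d_def by (meson dvd_def gcd_dvd1)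
  have "zsmul k a = zsmul (k * s) g" using assms(3) by (simp add: zs_mult)
  also have "k * s = int r * s'" using ok s' by simp
  finally have "zsmul k a = 0" using r(2) by simp
  then have "zsmul k b = 0" using ann by blast
  then have "zsmul (k * t) g = 0" using assms(4) by (simp add: zs_mult)
  then have "d * k dvd k * t" using r(2) ok by simp
  then have "k * d dvd k * t" by (simp add: mult.commute)
  then have "d dvd t" using k0 by simp
  then obtain w where w: "t = d * w" by blast
  obtain u' v' where uv: "u' * s + v' * int r = d" using bezout_int[of s "int r"] d_def by blast
  have "b = zsmul ((u' * w) * s + (v' * w) * int r) g"
    using assms(4) w uv by (simp add: algebra_simps flip: uv)
  also have "\<dots> = zsmul (u' * w) a + zsmul (v' * w) (zsmul (int r) g)"
    using assms(3) by (simp add: zs_add zs_mult)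
  also have "\<dots> = zsmul (u' * w) a" using r(2)[of "int r"] by simp
  finally show ?thesis by blast
qed

lemma fin_index:
  assumes "finite_quot H K" "subgrp K" "\<forall>e\<in>H. \<forall>i. nsmul i e \<in> H"
  shows "\<exists>N>0. \<forall>e\<in>H. nsmul N e \<in> K"
proof -
  define C where "C = (\<lambda>y. {y + k |k. k \<in> K}) ` H"
  have fC: "finite C" using assms(1) unfolding finite_quot_def C_def .
  define c where "c = card C"
  have "nsmul (fact c) e \<in> K" if e: "e \<in> H" for e
  proof -
    define f where "f i = {nsmul i e + k |k. k \<in> K}" for i
    have sub: "f ` {0..c} \<subseteq> C" using e assms(3) unfolding f_def C_def by auto
    have "\<not> inj_on f {0..c}"
    proof
      assume "inj_on f {0..c}"
      from card_inj_on_le[OF this sub fC] show False unfolding c_def by simp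
    qed
    then obtain i j where ij: "i \<in> {0..c}" "j \<in> {0..c}" "i \<noteq> j" "f i = f j"
      unfolding inj_on_def by blast
    have key: "nsmul (j' - i') e \<in> K \<and> 1 \<le> j' - i' \<and> j' - i' \<le> c"
      if "i' < j'" "j' \<le> c" "f i' = f j'" for i' j'
    proof -
      have "nsmul j' e \<in> f j'" unfolding f_def using subgrp_0[OF assms(2)] by force
      then have "nsmul j' e \<in> f i'" using that by simp
      then obtain k where k: "k \<in> K" "nsmul j' e = nsmul i' e + k" unfolding f_def by blast
      have "nsmul j' e = nsmul (j' - i') e + nsmul i' e" using that ns_add[of "j' - i'" i' e] by simp
      then have "nsmul (j' - i') e = k" using k by (simp add: add.commute)
      then show ?thesis using k that by auto
    qed
    obtain m where m: "nsmul m e \<in> K" "1 \<le> m" "m \<le> c"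
    proof (cases "i < j")
      case True then show ?thesis using key[of i j] ij that by auto
    next
      case False then have "j < i" using ij by auto
      then show ?thesis using key[of j i] ij that by auto
    qed
    then obtain q where q: "fact c = q * m" using dvd_fact[of m c] by (auto simp: dvd_def mult.commute)
    have "nsmul (fact c) e = nsmul q (nsmul m e)" by (simp add: q ns_mult)
    then show ?thesis using m(1) subgrp_ns[OF assms(2)] by simp
  qed
  then show ?thesis by (intro exI[of _ "fact c"]) auto
qed

lemma cyc_mem: "zsmul t g \<in> cyc g" by (auto simp: cyc_def)
lemma cyc_self: "g \<in> cyc g" using cyc_mem[of 1 g] by simp

lemma cyc_trans: "a \<in> cyc b \<Longrightarrow> cyc a \<subseteq> cyc b"
  by (auto simp: cyc_def zs_mult[symmetric])

lemma cyc_subgrp: "subgrp (cyc g)"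
  unfolding subgrp_def cyc_def
  by (auto simp: zs_add[symmetric] zs_neg[symmetric] intro!: range_eqI[of _ _ 0])

lemma cyc_sub: "subgrp D \<Longrightarrow> g \<in> D \<Longrightarrow> cyc g \<subseteq> D"
  by (auto simp: cyc_def subgrp_zs)

lemma subgrp_image: "subgrp X \<Longrightarrow> endo f \<Longrightarrow> subgrp (f ` X)"
  unfolding subgrp_def
  by (auto simp: endo_0 intro!: image_eqI[of _ f] simp flip: endo_add endo_uminus)

lemma subgrp_Int: "subgrp X \<Longrightarrow> subgrp Y \<Longrightarrow> subgrp (X \<inter> Y)"
  unfolding subgrp_def by auto

lemma per_elem:
  fixes D :: "'a::ab_group_add set" and \<phi> :: "'a \<Rightarrow> 'a"
  assumes D: "subgrp D" "divisible D" "periodic D"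
    and e: "endo \<phi>"
    and ine: "inertial \<phi> \<or> left_inertial \<phi>"
    and x: "x \<in> D"
  shows "\<exists>t. \<phi> x = zsmul t x"
proof -
  have "\<exists>f::nat \<Rightarrow> 'a. \<forall>n::nat. (f n \<in> D \<and> (n = 0 \<longrightarrow> f n = x)) \<and> nsmul (fact (Suc n)) (f (Suc n)) = f n"
  proof (rule dependent_nat_choice)
    show "\<exists>y. y \<in> D \<and> (0 = (0::nat) \<longrightarrow> y = x)" using x by blast
  next
    fix y and n :: nat assume "y \<in> D \<and> (n = 0 \<longrightarrow> y = x)"
    then obtain w where "w \<in> D" "nsmul (fact (Suc n)) w = y"
      using D(2) unfolding divisible_def by (meson fact_gt_zero)
    then show "\<exists>w. (w \<in> D \<and> (Suc n = 0 \<longrightarrow> w = x)) \<and> nsmul (fact (Suc n)) w = y" by auto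
  qed
  then obtain f where fD: "\<And>n. f n \<in> D" and f0: "f 0 = x"
    and fs: "\<And>n. nsmul (fact (Suc n)) (f (Suc n)) = f n" by blast
  have mono: "f i \<in> cyc (f j)" if "i \<le> j" for i j
    using that
  proof (induction j rule: dec_induct)
    case base then show ?case by (rule cyc_self)
  next
    case (step j)
    have "f j \<in> cyc (f (Suc j))" using fs[of j] cyc_mem[of "int (fact (Suc j))" "f (Suc j)"]
      zs_nat by metis
    then show ?case using step cyc_trans by blast
  qed
  define X where "X = (\<Union>i. cyc (f i))"
  have XD: "X \<subseteq> D" unfolding X_def using cyc_sub[OF D(1) fD] by blast
  have Xsub: "subgrp X"
    unfolding subgrp_def
  proof (intro conjI ballI)
    show "0 \<in> X" unfolding X_def using subgrp_0[OF cyc_subgrp] by blast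
  next
    fix a b assume "a \<in> X" "b \<in> X"
    then obtain i j where "a \<in> cyc (f i)" "b \<in> cyc (f j)" unfolding X_def by blast
    then have "a \<in> cyc (f (max i j))" "b \<in> cyc (f (max i j))"
      using mono[of i "max i j"] mono[of j "max i j"] cyc_trans by auto
    then show "a + b \<in> X" unfolding X_def using subgrp_add[OF cyc_subgrp] by blast
  next
    fix a assume "a \<in> X"
    then show "- a \<in> X" unfolding X_def using cyc_subgrp unfolding subgrp_def by blast
  qed
  have Xdiv: "\<exists>w\<in>X. nsmul n w = z" if "z \<in> X" "n > 0" for z n
  proof -
    obtain i t where z: "z = zsmul t (f i)" using \<open>z \<in> X\<close> unfolding X_def cyc_def by blast
    define j where "j = i + n"
    obtain s where s: "f i = zsmul s (f j)" using mono[of i j] unfolding j_def cyc_def by auto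
    have "n dvd fact (Suc j)" using that by (intro dvd_fact) (auto simp: j_def)
    then obtain q where q: "fact (Suc j) = n * q" by (auto elim: dvdE)
    have qi: "int (fact (Suc j)) = int n * int q" using q by (metis of_nat_mult)
    define w where "w = zsmul (t * s * int q) (f (Suc j))"
    have "nsmul n w = zsmul (int n * (t * s * int q)) (f (Suc j))"
      unfolding w_def by (simp add: zs_nat[symmetric] zs_mult)
    also have "int n * (t * s * int q) = (t * s) * int (fact (Suc j))" by (simp only: qi) (simp add: algebra_simps)
    also have "zsmul \<dots> (f (Suc j)) = z" by (simp only: zs_mult zs_nat fs) (simp add: z s zs_mult)
    finally show ?thesis unfolding w_def X_def using cyc_mem by blast
  qed
  have ann: "\<forall>k. zsmul k x = 0 \<longrightarrow> zsmul k (\<phi> x) = 0"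
    using e by (simp add: endo_zs[symmetric] endo_0)
  have per: "\<exists>n>0. nsmul n g = 0" if "g \<in> D" for g
    using D(3) that unfolding periodic_def by blast
  from ine show ?thesis
  proof
    assume "inertial \<phi>"
    define H where "H = {a + b | a b. a \<in> \<phi> ` X \<and> b \<in> X}"
    have fq: "finite_quot H X" using \<open>inertial \<phi>\<close> Xsub unfolding inertial_def H_def by blast
    have "\<forall>h\<in>H. \<forall>i. nsmul i h \<in> H"
    proof (intro ballI allI)
      fix h i assume "h \<in> H"
      then obtain a b where "a \<in> X" "b \<in> X" "h = \<phi> a + b" unfolding H_def by blast
      then show "nsmul i h \<in> H" unfolding H_def
        using subgrp_ns[OF Xsub] by (force simp: ns_plus endo_ns[OF e, symmetric])
    qed
    then obtain N where N: "N > 0" "\<forall>h\<in>H. nsmul N h \<in> X" using fin_index[OF fq Xsub] by blast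
    have "x \<in> X" using f0 cyc_self unfolding X_def by blast
    then obtain w where w: "w \<in> X" "nsmul N w = x" using Xdiv N(1) by blast
    have "\<phi> w + 0 \<in> H" unfolding H_def using w(1) subgrp_0[OF Xsub] by blast
    then have "nsmul N (\<phi> w) \<in> X" using N(2) by force
    then have "\<phi> x \<in> X" using w(2) endo_ns[OF e] by metis
    then obtain j where j: "\<phi> x \<in> cyc (f j)" unfolding X_def by blast
    obtain s where s: "x = zsmul s (f j)" using mono[of 0 j] f0 unfolding cyc_def by auto
    obtain t where t: "\<phi> x = zsmul t (f j)" using j unfolding cyc_def by auto
    obtain n where n: "n > 0" "nsmul n (f j) = 0" using per[OF fD] by blast
    show ?thesis using cyc_lemma[OF n(2,1) s t ann] by blast
  next
    assume "left_inertial \<phi>"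
    define K where "K = X \<inter> \<phi> ` X"
    have Ksub: "subgrp K" unfolding K_def using subgrp_Int[OF Xsub subgrp_image[OF Xsub e]] .
    have fq: "finite_quot X K" using \<open>left_inertial \<phi>\<close> Xsub unfolding left_inertial_def K_def by blast
    have "\<forall>h\<in>X. \<forall>i. nsmul i h \<in> X" using subgrp_ns[OF Xsub] by blast
    then obtain N where N: "N > 0" "\<forall>h\<in>X. nsmul N h \<in> K" using fin_index[OF fq Ksub] by blast
    have "x \<in> X" using f0 cyc_self unfolding X_def by blast
    then obtain w where w: "w \<in> X" "nsmul N w = x" using Xdiv N(1) by blast
    then have "x \<in> \<phi> ` X" using N(2) unfolding K_def by blast
    then obtain z where z: "z \<in> X" "x = \<phi> z" by blast
    then obtain j s where zj: "z = zsmul s (f j)" unfolding X_def cyc_def by blast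
    obtain s' where s': "x = zsmul s' (f j)" using mono[of 0 j] f0 unfolding cyc_def by auto
    have a: "x = zsmul s (\<phi> (f j))" using z zj endo_zs[OF e] by simp
    have b: "\<phi> x = zsmul s' (\<phi> (f j))" using s' endo_zs[OF e] by simp
    obtain n where n: "n > 0" "nsmul n (f j) = 0" using per[OF fD] by blast
    have n': "nsmul n (\<phi> (f j)) = 0" using n(2) endo_ns[OF e] endo_0[OF e] by metis
    show ?thesis using cyc_lemma[OF n' n(1) a b ann] by blast
  qed
qed

lemma cyc_zs: "a \<in> cyc g \<Longrightarrow> zsmul t a \<in> cyc g"
  by (auto simp: cyc_def zs_mult[symmetric])

lemma zs_diff: "zsmul a (x - y) = zsmul a x - zsmul a y"
  by (metis diff_conv_add_uminus zs_plus zs_uminus)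

lemma zs_comm: "zsmul a (zsmul b x) = zsmul b (zsmul a x)"
  by (metis mult.commute zs_mult)

lemma lemG:
  fixes D :: "'a::ab_group_add set" and \<phi> :: "'a \<Rightarrow> 'a"
  assumes D: "subgrp D" and e: "endo \<phi>" and inv: "\<forall>y\<in>D. \<exists>t. \<phi> y = zsmul t y"
    and p: "prime p" and g: "g \<in> D" and ann: "\<forall>t. zsmul t g = 0 \<longleftrightarrow> int p ^ K dvd t"
    and c: "\<phi> g = zsmul c g"
  shows "j \<le> K \<Longrightarrow> y \<in> D \<Longrightarrow> zsmul (int p ^ j) y = 0 \<Longrightarrow> \<phi> y = zsmul c y"
proof (induction j arbitrary: y)
  case 0
  then have "y = 0" by simp
  then show ?case using endo_0[OF e] by simp
next
  case (Suc j)
  have p0: "int p \<noteq> 0" using p by auto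
  define z where "z = zsmul (int p ^ j) y"
  have pz: "zsmul (int p) z = 0" using Suc.prems(3) by (simp add: z_def zs_mult[symmetric] mult.commute)
  show ?case
  proof (cases "z \<in> cyc g")
    case True
    then obtain t where t: "z = zsmul t g" unfolding cyc_def by auto
    obtain K' where K': "K = Suc K'" using Suc.prems(1) by (cases K) auto
    have "zsmul (int p * t) g = 0" using pz t by (simp add: zs_mult)
    then have "int p * int p ^ K' dvd int p * t" using ann K' by simp
    then have "int p ^ K' dvd t" using p0 by simp
    then obtain s where s: "t = int p ^ K' * s" by blast
    define l where "l = K' - j"
    have Kl: "K' = j + l" using Suc.prems(1) K' l_def by simp
    define h where "h = zsmul (s * int p ^ l) g"
    define y2 where "y2 = y - h"
    have hD: "h \<in> D" unfolding h_def using subgrp_zs[OF D g] .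
    have y2D: "y2 \<in> D" unfolding y2_def using subgrp_diff[OF D Suc.prems(2) hD] .
    have "zsmul (int p ^ j) h = zsmul (int p ^ j * (s * int p ^ l)) g" unfolding h_def by (simp add: zs_mult)
    also have "int p ^ j * (s * int p ^ l) = t" unfolding s Kl power_add by (simp only: ac_simps)
    finally have "zsmul (int p ^ j) h = z" using t by simp
    then have "zsmul (int p ^ j) y2 = 0" unfolding y2_def z_def by (simp add: zs_diff)
    then have IH: "\<phi> y2 = zsmul c y2" using Suc.IH[OF _ y2D] Suc.prems(1) by simp
    have "\<phi> h = zsmul (s * int p ^ l) (zsmul c g)" unfolding h_def using endo_zs[OF e] c by simp
    also have "\<dots> = zsmul c h" unfolding h_def by (rule zs_comm)
    finally have "\<phi> y = zsmul c y2 + zsmul c h"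
      using IH endo_add[OF e, of y2 h] unfolding y2_def by simp
    also have "\<dots> = zsmul c y" unfolding y2_def by (simp add: zs_plus[symmetric])
    finally show ?thesis .
  next
    case False
    have ygD: "y + g \<in> D" using subgrp_add[OF D Suc.prems(2) g] .
    obtain b where b: "\<phi> y = zsmul b y" using inv Suc.prems(2) by blast
    obtain d where d: "\<phi> (y + g) = zsmul d (y + g)" using inv ygD by blast
    have "zsmul d y + zsmul d g = zsmul b y + zsmul c g"
      using d b c endo_add[OF e, of y g] by (simp add: zs_plus)
    then have eq: "zsmul (b - d) y = zsmul (d - c) g"
      by (simp add: zs_minus algebra_simps)
    have m0: "zsmul (b - d) y = 0"
    proof (rule ccontr)
      assume nz: "zsmul (b - d) y \<noteq> 0"
      define G where "G = gcd (b - d) (int p ^ Suc j)"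
      have "G dvd int p ^ Suc j" unfolding G_def by simp
      moreover have "G \<ge> 0" unfolding G_def by simp
      ultimately have "int (nat G) dvd int (p ^ Suc j)" by simp
      then have "nat G dvd p ^ Suc j" by (simp only: int_dvd_int_iff)
      then obtain r where r: "r \<le> Suc j" "nat G = p ^ r" using divides_primepow_nat[OF p] by blast
      have Gr: "G = int p ^ r" using r(2) \<open>G \<ge> 0\<close> by (metis int_nat_eq nat_0_le of_nat_power)
      have "r \<noteq> Suc j"
      proof
        assume "r = Suc j"
        then have "int p ^ Suc j dvd b - d" using Gr unfolding G_def by (metis gcd_dvd1)
        then show False using nz zs_dvd_zero Suc.prems(3) by blast
      qed
      then have rj: "r \<le> j" using r(1) by simp
      obtain \<alpha> \<beta> where ab: "\<alpha> * (b - d) + \<beta> * int p ^ Suc j = G" using bezout_int unfolding G_def by blast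
      have "int p ^ r = \<alpha> * (b - d) + \<beta> * int p ^ Suc j" using ab Gr by simp
      then have "zsmul (int p ^ r) y = zsmul (\<alpha> * (b - d) + \<beta> * int p ^ Suc j) y" by (simp only:)
      also have "\<dots> = zsmul \<alpha> (zsmul (b - d) y) + zsmul \<beta> (zsmul (int p ^ Suc j) y)"
        by (simp only: zs_add zs_mult)
      also have "\<dots> = zsmul \<alpha> (zsmul (d - c) g)" using eq Suc.prems(3) by simp
      finally have "zsmul (int p ^ r) y \<in> cyc g" by (metis cyc_mem cyc_zs)
      then have "zsmul (int p ^ (j - r)) (zsmul (int p ^ r) y) \<in> cyc g" by (rule cyc_zs)
      moreover have "zsmul (int p ^ (j - r)) (zsmul (int p ^ r) y) = z"
        unfolding z_def using rj by (simp add: zs_mult[symmetric] power_add[symmetric])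
      ultimately show False using False by simp
    qed
    then have "zsmul (d - c) g = 0" using eq by simp
    then have "int p ^ K dvd d - c" using ann by simp
    moreover have "int p ^ Suc j dvd int p ^ K" using Suc.prems(1) le_imp_power_dvd by blast
    ultimately have "zsmul (d - c) y = 0" using zs_dvd_zero Suc.prems(3) dvd_trans by blast
    have "\<phi> y = zsmul (b - d) y + zsmul (d - c) y + zsmul c y" using b by (simp add: zs_add[symmetric])
    then show ?thesis using m0 \<open>zsmul (d - c) y = 0\<close> by simp
  qed
qed

lemma Rp:
  fixes D :: "'a::ab_group_add set" and \<phi> :: "'a \<Rightarrow> 'a"
  assumes D: "subgrp D" "divisible D" and e: "endo \<phi>" and inv: "\<forall>y\<in>D. \<exists>t. \<phi> y = zsmul t y"
    and p: "prime p"
  shows "\<exists>\<alpha>. padic_int p \<alpha> \<and> (\<forall>k y. y \<in> D \<longrightarrow> zsmul (int p ^ k) y = 0 \<longrightarrow> \<phi> y = zsmul (\<alpha> k) y)"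
proof (cases "\<exists>y0\<in>D. y0 \<noteq> 0 \<and> zsmul (int p) y0 = 0")
  case True
  then obtain y0 where y0: "y0 \<in> D" "y0 \<noteq> 0" "zsmul (int p) y0 = 0" by blast
  have p0: "p > 0" using p prime_gt_0_nat by blast
  have "\<exists>f::nat \<Rightarrow> 'a. \<forall>n::nat. (f n \<in> D \<and> (n = 0 \<longrightarrow> f n = y0)) \<and> zsmul (int p) (f (Suc n)) = f n"
  proof (rule dependent_nat_choice)
    show "\<exists>y. y \<in> D \<and> (0 = (0::nat) \<longrightarrow> y = y0)" using y0 by blast
  next
    fix y and n :: nat assume "y \<in> D \<and> (n = 0 \<longrightarrow> y = y0)"
    then obtain w where "w \<in> D" "nsmul p w = y"
      using D(2) p0 unfolding divisible_def by meson
    then show "\<exists>w. (w \<in> D \<and> (Suc n = 0 \<longrightarrow> w = y0)) \<and> zsmul (int p) w = y" by (auto simp: zs_nat)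
  qed
  then obtain f where fD: "\<And>n. f n \<in> D" and f0: "f 0 = y0"
    and fs: "\<And>n. zsmul (int p) (f (Suc n)) = f n" by blast
  have ord: "\<forall>t. zsmul t (f k) = 0 \<longleftrightarrow> int p ^ Suc k dvd t" for k
  proof (induction k)
    case 0
    have "nsmul p y0 = 0" using y0(3) by (simp add: zs_nat)
    then obtain r where r: "r > 0" "\<And>t. zsmul t y0 = 0 \<longleftrightarrow> int r dvd t"
      using ord_exists p0 by blast
    have "int r dvd int p" using r(2)[of "int p"] y0(3) by simp
    then have "r dvd p" by simp
    moreover have "r \<noteq> 1" using r(2)[of 1] y0(2) by auto
    ultimately have "r = p" using p unfolding prime_nat_iff by blast
    then show ?case using r(2) f0 by simp
  next
    case (Suc k)
    show ?case
    proof (intro allI iffI)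
      fix t assume z: "zsmul t (f (Suc k)) = 0"
      have "zsmul t (f k) = zsmul (int p) (zsmul t (f (Suc k)))" using fs[of k] zs_comm by metis
      then have "zsmul t (f k) = 0" using z by simp
      then have "int p ^ Suc k dvd t" using Suc.IH by blast
      then obtain s where s: "t = int p ^ Suc k * s" by blast
      have "zsmul t (f (Suc k)) = zsmul (int p ^ k * s) (zsmul (int p) (f (Suc k)))"
        unfolding s by (simp add: zs_mult[symmetric] ac_simps)
      then have "zsmul (int p ^ k * s) (f k) = 0" using z fs by simp
      then have "int p ^ k * int p dvd int p ^ k * s" using Suc.IH by (simp add: ac_simps)
      then have "int p dvd s" using p by (simp add: prime_gt_0_nat)
      then show "int p ^ Suc (Suc k) dvd t" using s by (simp add: mult_dvd_mono)
    next
      fix t assume "int p ^ Suc (Suc k) dvd t"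
      then obtain s0 where "t = int p ^ Suc (Suc k) * s0" by blast
      then have s: "t = int p ^ Suc k * s0 * int p" by (simp add: ac_simps)
      have "zsmul t (f (Suc k)) = zsmul (int p ^ Suc k * s0) (f k)"
        unfolding s by (simp only: zs_mult fs)
      then show "zsmul t (f (Suc k)) = 0" using Suc.IH by simp
    qed
  qed
  have "\<forall>k. \<exists>t. \<phi> (f k) = zsmul t (f k)" using inv fD by blast
  from choice[OF this] obtain c where c: "\<And>k. \<phi> (f k) = zsmul (c k) (f k)" by blast
  have padic: "padic_int p c"
    unfolding padic_int_def
  proof
    fix k
    have "\<phi> (f k) = \<phi> (zsmul (int p) (f (Suc k)))" using fs[of k] by simp
    also have "\<dots> = zsmul (int p) (\<phi> (f (Suc k)))" by (rule endo_zs[OF e])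
    also have "\<dots> = zsmul (int p) (zsmul (c (Suc k)) (f (Suc k)))" using c by simp
    also have "\<dots> = zsmul (c (Suc k)) (zsmul (int p) (f (Suc k)))" by (rule zs_comm)
    also have "\<dots> = zsmul (c (Suc k)) (f k)" using fs[of k] by simp
    finally have "zsmul (c (Suc k) - c k) (f k) = 0" using c by (simp add: zs_minus)
    then have "int p ^ Suc k dvd c (Suc k) - c k" using ord by blast
    then have "int p ^ k dvd c (Suc k) - c k" by (metis dvd_mult_right power_Suc)
    then show "[c (Suc k) = c k] (mod int p ^ k)" by (simp add: cong_iff_dvd_diff)
  qed
  have "\<forall>k y. y \<in> D \<longrightarrow> zsmul (int p ^ k) y = 0 \<longrightarrow> \<phi> y = zsmul (c k) y"
  proof (intro allI impI)
    fix k y assume "y \<in> D" "zsmul (int p ^ k) y = 0"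
    have "k \<le> Suc k" by simp
    from lemG[OF D(1) e inv p fD ord c this \<open>y \<in> D\<close> \<open>zsmul (int p ^ k) y = 0\<close>]
    show "\<phi> y = zsmul (c k) y" .
  qed
  then show ?thesis using padic by blast
next
  case False
  have z: "y = 0" if "y \<in> D" "zsmul (int p ^ k) y = 0" for k y
    using that
  proof (induction k arbitrary: y)
    case 0 then show ?case by simp
  next
    case (Suc k)
    have "zsmul (int p ^ k) y \<in> D" using subgrp_zs[OF D(1) Suc.prems(1)] .
    moreover have "zsmul (int p) (zsmul (int p ^ k) y) = 0" using Suc.prems(2) by (simp add: zs_mult[symmetric])
    ultimately have "zsmul (int p ^ k) y = 0" using False by blast
    then show ?case using Suc.IH Suc.prems(1) by blast
  qed
  have "padic_int p (\<lambda>_. 0)" unfolding padic_int_def by simp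
  moreover have "\<forall>k y. y \<in> D \<longrightarrow> zsmul (int p ^ k) y = 0 \<longrightarrow> \<phi> y = zsmul ((\<lambda>_. 0) k) y"
    using z endo_0[OF e] by auto
  ultimately show ?thesis by blast
qed

lemma Qlem:
  fixes D :: "'a::ab_group_add set" and \<phi> :: "'a \<Rightarrow> 'a" and a :: "nat \<Rightarrow> nat \<Rightarrow> int"
  assumes D: "subgrp D" and e: "endo \<phi>"
    and A: "\<And>p k y. prime p \<Longrightarrow> y \<in> D \<Longrightarrow> zsmul (int p ^ k) y = 0 \<Longrightarrow> \<phi> y = zsmul (a p k) y"
  shows "0 < n \<Longrightarrow> x \<in> D \<Longrightarrow> zsmul (int n) x = 0 \<Longrightarrow>
    \<exists>m. (\<forall>q. prime q \<and> q dvd n \<longrightarrow> [m = a q (multiplicity q n)] (mod (int q ^ multiplicity q n)))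
        \<and> \<phi> x = zsmul m x"
proof (induction n arbitrary: x rule: less_induct)
  case (less n)
  show ?case
  proof (cases "n = 1")
    case True
    then have "x = 0" using less.prems by simp
    then show ?thesis using True endo_0[OF e] by (intro exI[of _ 0]) auto
  next
    case False
    then obtain p where p: "prime p" "p dvd n" using prime_factor_nat by blast
    define k where "k = multiplicity p n"
    have n0: "n \<noteq> 0" using less.prems by simp
    have "\<not> is_unit p" using p(1) prime_gt_1_nat by fastforce
    obtain n' where n': "n = p ^ k * n'" "\<not> p dvd n'" unfolding k_def
      using multiplicity_decompose'[OF n0 \<open>\<not> is_unit p\<close>] by blast
    then have k0: "k > 0" unfolding k_def using multiplicity_gt_zero_iff[OF n0] p(2) by blast
    have n'0: "n' > 0" using n' n0 by (cases "n' = 0") auto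
    have p1: "p > 1" using p(1) prime_gt_1_nat by blast
    have "p ^ k > 1" using p1 k0 by (metis one_less_power)
    then have n'lt: "n' < n" using n' n'0 by simp
    have cop: "coprime (int p ^ k) (int n')"
      using prime_imp_coprime[OF p(1) n'(2)] by simp
    obtain u v where uv: "u * int p ^ k + v * int n' = 1"
      using bezout_int[of "int p ^ k" "int n'"] cop by (metis coprime_imp_gcd_eq_1)
    define x1 where "x1 = zsmul (v * int n') x"
    define x2 where "x2 = zsmul (u * int p ^ k) x"
    have xx: "x = x1 + x2" unfolding x1_def x2_def
      using zs_add[of "v * int n'" "u * int p ^ k" x] uv by (simp add: add.commute)
    have x1D: "x1 \<in> D" "x2 \<in> D" unfolding x1_def x2_def using subgrp_zs[OF D less.prems(2)] by auto
    have nn: "int n = int p ^ k * int n'" using n' by simp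
    have "zsmul (int p ^ k) x1 = zsmul v (zsmul (int n) x)"
      unfolding x1_def nn by (simp only: zs_mult[symmetric] ac_simps)
    then have x1z: "zsmul (int p ^ k) x1 = 0" using less.prems(3) by simp
    have "zsmul (int n') x2 = zsmul u (zsmul (int n) x)"
      unfolding x2_def nn by (simp only: zs_mult[symmetric] ac_simps)
    then have x2z: "zsmul (int n') x2 = 0" using less.prems(3) by simp
    obtain m2 where m2: "\<forall>q. prime q \<and> q dvd n' \<longrightarrow> [m2 = a q (multiplicity q n')] (mod (int q ^ multiplicity q n'))"
      "\<phi> x2 = zsmul m2 x2"
      using less.IH[OF n'lt n'0 x1D(2) x2z] by blast
    have phi1: "\<phi> x1 = zsmul (a p k) x1" using A[OF p(1) x1D(1) x1z] .
    define m where "m = m2 * u * int p ^ k + a p k * v * int n'"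
    have d1: "m - a p k = int p ^ k * (m2 * u - a p k * u)"
    proof -
      have "v * int n' = 1 - u * int p ^ k" using uv by simp
      then have "a p k * v * int n' = a p k - a p k * u * int p ^ k"
        by (metis mult.assoc right_diff_distrib mult.right_neutral)
      then show ?thesis unfolding m_def by (simp add: algebra_simps)
    qed
    have d2: "m - m2 = int n' * (a p k * v - m2 * v)"
    proof -
      have "u * int p ^ k = 1 - v * int n'" using uv by simp
      then have "m2 * u * int p ^ k = m2 - m2 * v * int n'"
        by (metis mult.assoc right_diff_distrib mult.right_neutral)
      then show ?thesis unfolding m_def by (simp add: algebra_simps)
    qed
    have "zsmul m x1 = zsmul (a p k) x1 + zsmul (m - a p k) x1" by (simp add: zs_add[symmetric])
    also have "zsmul (m - a p k) x1 = 0" using zs_dvd_zero[OF x1z] d1 by simp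
    finally have e1: "zsmul m x1 = zsmul (a p k) x1" by simp
    have "zsmul m x2 = zsmul m2 x2 + zsmul (m - m2) x2" by (simp add: zs_add[symmetric])
    also have "zsmul (m - m2) x2 = 0" using zs_dvd_zero[OF x2z] d2 by simp
    finally have e2: "zsmul m x2 = zsmul m2 x2" by simp
    have phix: "\<phi> x = zsmul m x"
      using xx endo_add[OF e, of x1 x2] phi1 m2(2) e1 e2 by (simp add: zs_plus)
    have "[m = a q (multiplicity q n)] (mod (int q ^ multiplicity q n))" if q: "prime q" "q dvd n" for q
    proof (cases "q = p")
      case True
      have "[m = a p k] (mod int p ^ k)" using d1 by (simp add: cong_iff_dvd_diff)
      then show ?thesis using True k_def by simp
    next
      case False
      have "\<not> q dvd p ^ k"
      proof
        assume "q dvd p ^ k"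
        then have "q dvd p" using prime_dvd_power[OF q(1)] by blast
        then show False using primes_dvd_imp_eq[OF q(1) p(1)] False by blast
      qed
      then have qn': "q dvd n'" using q n' prime_dvd_mult_iff[OF q(1)] by auto
      have "multiplicity q n = multiplicity q (p ^ k) + multiplicity q n'"
        unfolding n'(1) using prime_elem_multiplicity_mult_distrib[of q "p ^ k" n'] q(1) n'0 p1 by simp
      also have "multiplicity q (p ^ k) = 0" by (rule not_dvd_imp_multiplicity_0) fact
      finally have mq: "multiplicity q n = multiplicity q n'" by simp
      have "int (q ^ multiplicity q n') dvd int n'" using multiplicity_dvd[of q n'] by (simp only: int_dvd_int_iff)
      then have dv: "int q ^ multiplicity q n' dvd int n'" by simp
      have "[m = m2] (mod int n')" using d2 by (simp add: cong_iff_dvd_diff)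
      then have "[m = m2] (mod int q ^ multiplicity q n')" using cong_dvd_modulus dv by blast
      moreover have "[m2 = a q (multiplicity q n')] (mod (int q ^ multiplicity q n'))" using m2(1) q(1) qn' by blast
      ultimately show ?thesis using mq cong_trans by metis
    qed
    then show ?thesis using phix by blast
  qed
qed

theorem lemma3p4:
  fixes D :: "'a::ab_group_add set" and \<phi> :: "'a \<Rightarrow> 'a"
  assumes "subgrp D" and "divisible D" and "periodic D"
    and "endo \<phi>"
    and "inertial \<phi> \<or> left_inertial \<phi>"
  shows "\<phi> ` D \<subseteq> D \<and> acts_as_multiplication \<phi> D"
proof -
  have inv: "\<forall>y\<in>D. \<exists>t. \<phi> y = zsmul t y" using per_elem[OF assms] by blast
  have sub: "\<phi> ` D \<subseteq> D" using inv subgrp_zs[OF assms(1)] by auto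
  have "\<forall>p. \<exists>\<alpha>. prime p \<longrightarrow> padic_int p \<alpha> \<and> (\<forall>k y. y \<in> D \<longrightarrow> zsmul (int p ^ k) y = 0 \<longrightarrow> \<phi> y = zsmul (\<alpha> k) y)"
    using Rp[OF assms(1,2,4) inv] by blast
  from choice[OF this] obtain a where a: "\<And>p. prime p \<Longrightarrow> padic_int p (a p) \<and> (\<forall>k y. y \<in> D \<longrightarrow> zsmul (int p ^ k) y = 0 \<longrightarrow> \<phi> y = zsmul (a p k) y)"
    by blast
  have A: "\<And>p k y. prime p \<Longrightarrow> y \<in> D \<Longrightarrow> zsmul (int p ^ k) y = 0 \<Longrightarrow> \<phi> y = zsmul (a p k) y"
    using a by blast
  have "acts_as_multiplication \<phi> D"
    unfolding acts_as_multiplication_def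
  proof (intro exI[of _ a] conjI allI impI ballI)
    fix p :: nat assume "prime p" then show "padic_int p (a p)" using a by blast
  next
    fix x n assume "x \<in> D" "0 < n" "nsmul n x = 0"
    then show "\<exists>m. (\<forall>p. prime p \<and> p dvd n \<longrightarrow> [m = a p (multiplicity p n)] (mod int p ^ multiplicity p n)) \<and> \<phi> x = zsmul m x"
      using Qlem[OF assms(1,4) A] by (simp add: zs_nat)
  qed
  then show ?thesis using sub by blast
qed

end
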